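(* Let $\Delta$ be a simplicial polytopal fan in $\mathbb{R}^d$ with ray generators $\mathbf{v}_1,\ldots,\mathbf{v}_n$, and let $\{(\mathbf{u}^{(i)},y^{(i)})\}_{i=1}^m\subset\mathbb{R}^d\times\mathbb{R}$ be noiseless data, i.e. there is a polytope $P\in\mathcal{P}(\Delta)$ with $y^{(i)}=h_P(\mathbf{u}^{(i)})$ for all $i$. With $U=(\mathbf{u}^{(1)},\ldots,\mathbf{u}^{(m)})^\mathsf{T}$ and $\mathbf{y}=(y^{(i)})_i$, \[ \hat{P}^\Delta(U,\mathbf{y})=\{\mathbf{h}\in\mathcal{P}(\Delta)\colon A_U\mathbf{h}=\mathbf{y}\}. \]
   Context: A fan is simplicial if every cone is generated by linearly independent vectors; polytopal if it is the normal fan of a polytope. $h_P(\mathbf{u})=\max_{\mathbf{x}\in P}\langle\mathbf{x},\mathbf{u}\rangle$. For $\mathbf{h}\in\mathbb{R}^n$, $P(\mathbf{h})=\{\mathbf{x}\colon\langle\mathbf{x},\mathbf{v}_i\rangle\le h_i\ \forall i\}$. The deformation cone $\mathcal{P}(\Delta)$ is the set of polytopes whose normal fan is coarsened by $\Delta$, identified via support vectors $\mathbf{h}=(h_P(\mathbf{v}_i))_i$ with a closed polyhedral cone in $\mathbb{R}^n$. For $\mathbf{u}\in\mathbb{R}^d$, with $\sigma$ the cone of $\Delta$ containing $\mathbf{u}$ in its relative interior and $\mathbf{u}=\sum_{k\in I_\sigma}\lambda_k\mathbf{v}_k$ over the generators of $\sigma$, set $[\mathbf{u}]_i=\lambda_i$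 for $i\in I_\sigma$ and $0$ otherwise. $A_U$ is the $m\times n$ matrix with rows $[\mathbf{u}^{(i)}]^\mathsf{T}$. The least-squares estimator $\hat{P}^\Delta(U,\mathbf{y})$ is the set of support vectors of polytopes $P\in\mathcal{P}(\Delta)$ minimizing $\frac1m\sum_i(h_P(\mathbf{u}^{(i)})-y^{(i)})^2$. *)

theory Defs
  imports "HOL-Analysis.Analysis"
begin

text \<open>Ray generators are indexed by a finite type 'n (so n = CARD('n)); a cone of the
  fan is described by the index set S of its generators, cone S = pos_hull v S.\<close>

definition pos_hull :: "('n \<Rightarrow> 'a::euclidean_space) \<Rightarrow> 'n set \<Rightarrow> 'a set" where
  "pos_hull v S = {(\<Sum>i\<in>S. c i *\<^sub>R v i) | c. \<forall>i\<in>S. c i \<ge> 0}"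

definition simplicial_fan :: "('n::finite \<Rightarrow> 'a::euclidean_space) \<Rightarrow> 'n set set \<Rightarrow> bool" where
  "simplicial_fan v Delta \<longleftrightarrow>
     {} \<in> Delta \<and>
     (\<forall>S\<in>Delta. \<forall>T. T \<subseteq> S \<longrightarrow> T \<in> Delta) \<and>
     (\<forall>S\<in>Delta. inj_on v S \<and> independent (v ` S)) \<and>
     (\<forall>S\<in>Delta. \<forall>T\<in>Delta. pos_hull v S \<inter> pos_hull v T = pos_hull v (S \<inter> T)) \<and>
     (\<forall>i. {i} \<in> Delta)"

definition fan_cones :: "('n \<Rightarrow> 'a::euclidean_space) \<Rightarrow> 'n set set \<Rightarrow> 'a set set" where
  "fan_cones v Delta = pos_hull v ` Delta"

definition normal_cone :: "'a::euclidean_space set \<Rightarrow> 'a set \<Rightarrow> 'a set" where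
  "normal_cone P F = {u. \<forall>x\<in>F. \<forall>z\<in>P. inner z u \<le> inner x u}"

definition normal_fan :: "'a::euclidean_space set \<Rightarrow> 'a set set" where
  "normal_fan P = {normal_cone P F | F. F face_of P \<and> F \<noteq> {}}"

definition polytopal_fan :: "('n::finite \<Rightarrow> 'a::euclidean_space) \<Rightarrow> 'n set set \<Rightarrow> bool" where
  "polytopal_fan v Delta \<longleftrightarrow> (\<exists>Q. polytope Q \<and> Q \<noteq> {} \<and> normal_fan Q = fan_cones v Delta)"

definition support_fun :: "'a::euclidean_space set \<Rightarrow> 'a \<Rightarrow> real" where
  "support_fun P u = (SUP x\<in>P. inner x u)"

definition coarsened_by :: "'a::euclidean_space set \<Rightarrow> ('n \<Rightarrow> 'a) \<Rightarrow> 'n set set \<Rightarrow> bool" where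
  "coarsened_by P v Delta \<longleftrightarrow> (\<forall>S\<in>Delta. \<exists>C\<in>normal_fan P. pos_hull v S \<subseteq> C)"

definition def_polytopes :: "('n::finite \<Rightarrow> 'a::euclidean_space) \<Rightarrow> 'n set set \<Rightarrow> 'a set set" where
  "def_polytopes v Delta = {P. polytope P \<and> P \<noteq> {} \<and> coarsened_by P v Delta}"

definition support_vec :: "('n::finite \<Rightarrow> 'a::euclidean_space) \<Rightarrow> 'a set \<Rightarrow> real^'n" where
  "support_vec v P = (\<chi> i. support_fun P (v i))"

definition deformation_cone :: "('n::finite \<Rightarrow> 'a::euclidean_space) \<Rightarrow> 'n set set \<Rightarrow> (real^'n) set" where
  "deformation_cone v Delta = support_vec v ` def_polytopes v Delta"

definition fan_coords :: "('n::finite \<Rightarrow> 'a::euclidean_space) \<Rightarrow> 'n set set \<Rightarrow> 'a \<Rightarrow> real^'n" where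
  "fan_coords v Delta u = (THE lam. \<exists>S\<in>Delta. u \<in> rel_interior (pos_hull v S) \<and>
       (\<forall>i. i \<notin> S \<longrightarrow> lam $ i = 0) \<and> u = (\<Sum>i\<in>S. (lam $ i) *\<^sub>R v i))"

definition A_mat :: "('n::finite \<Rightarrow> 'a::euclidean_space) \<Rightarrow> 'n set set \<Rightarrow> ('m::finite \<Rightarrow> 'a) \<Rightarrow> real^'n^'m" where
  "A_mat v Delta U = (\<chi> i. fan_coords v Delta (U i))"

definition ls_objective :: "'a::euclidean_space set \<Rightarrow> ('m::finite \<Rightarrow> 'a) \<Rightarrow> real^'m \<Rightarrow> real" where
  "ls_objective P U y = (1 / real CARD('m)) * (\<Sum>i\<in>UNIV. (support_fun P (U i) - y $ i)\<^sup>2)"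

definition ls_estimator :: "('n::finite \<Rightarrow> 'a::euclidean_space) \<Rightarrow> 'n set set \<Rightarrow> ('m::finite \<Rightarrow> 'a) \<Rightarrow> real^'m \<Rightarrow> (real^'n) set" where
  "ls_estimator v Delta U y = support_vec v ` {P \<in> def_polytopes v Delta.
       \<forall>Q\<in>def_polytopes v Delta. ls_objective P U y \<le> ls_objective Q U y}"

end

theory Submission
  imports Defs
begin

lemma indep_coeffs_zero:
  fixes v :: "'n \<Rightarrow> 'a::euclidean_space"
  assumes "finite S" "inj_on v S" "independent (v ` S)"
    and "(\<Sum>i\<in>S. d i *\<^sub>R v i) = 0" "i \<in> S"
  shows "d i = 0"
proof -
  define e where "e = d \<circ> inv_into S v"
  have "(\<Sum>x\<in>v ` S. e x *\<^sub>R x) = (\<Sum>i\<in>S. e (v i) *\<^sub>R v i)"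
    using sum.reindex[OF assms(2), of "\<lambda>x. e x *\<^sub>R x"] by (simp add: comp_def)
  also have "\<dots> = (\<Sum>i\<in>S. d i *\<^sub>R v i)"
  proof (rule sum.cong)
    fix j assume "j \<in> S"
    thus "e (v j) *\<^sub>R v j = d j *\<^sub>R v j" using inv_into_f_f[OF assms(2)] by (simp add: e_def)
  qed (rule refl)
  finally have z: "(\<Sum>x\<in>v ` S. e x *\<^sub>R x) = 0" using assms(4) by simp
  have "\<forall>c. (\<Sum>x\<in>v ` S. c x *\<^sub>R x) = 0 \<longrightarrow> (\<forall>x\<in>v ` S. c x = 0)"
    using assms(3) unfolding independent_explicit by (rule conjunct2)
  hence imp: "(\<Sum>x\<in>v ` S. e x *\<^sub>R x) = 0 \<longrightarrow> (\<forall>x\<in>v ` S. e x = 0)" by (rule spec)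
  from imp z have "\<forall>x\<in>v ` S. e x = 0" by (rule mp)
  hence "e (v i) = 0" using assms(5) by (rule bspec[OF _ imageI])
  thus ?thesis using inv_into_f_f[OF assms(2,5)] by (simp add: e_def)
qed

lemma indep_coeffs_eq:
  fixes v :: "'n \<Rightarrow> 'a::euclidean_space"
  assumes "finite S" "inj_on v S" "independent (v ` S)"
    and "(\<Sum>i\<in>S. c i *\<^sub>R v i) = (\<Sum>i\<in>S. d i *\<^sub>R v i)" "i \<in> S"
  shows "c i = d i"
proof -
  have "(\<Sum>i\<in>S. (c i - d i) *\<^sub>R v i) = 0"
    using assms(4) by (simp add: scaleR_diff_left sum_subtractf)
  from indep_coeffs_zero[OF assms(1-3) this assms(5)] show ?thesis by simp
qed

lemma support_fun_eq:
  fixes P :: "'a::euclidean_space set"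
  assumes "x \<in> P" "\<And>z. z \<in> P \<Longrightarrow> inner z u \<le> inner x u"
  shows "support_fun P u = inner x u"
  unfolding support_fun_def
  by (rule cSup_eq_maximum) (use assms in auto)

lemma fan_complete:
  fixes v :: "'n::finite \<Rightarrow> 'a::euclidean_space"
  assumes "polytopal_fan v Delta"
  shows "\<exists>S\<in>Delta. u \<in> pos_hull v S"
proof -
  obtain Q where Q: "polytope Q" "Q \<noteq> {}" "normal_fan Q = fan_cones v Delta"
    using assms unfolding polytopal_fan_def by blast
  have "compact Q" using Q(1) polytope_imp_compact by blast
  have "\<exists>x\<in>Q. \<forall>y\<in>Q. inner y u \<le> inner x u"
  proof (rule continuous_attains_sup)
    show "compact Q" by fact
    show "Q \<noteq> {}" by fact
    show "continuous_on Q (\<lambda>y. inner y u)" by (intro continuous_intros)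
  qed
  then obtain x where x: "x \<in> Q" "\<And>z. z \<in> Q \<Longrightarrow> inner z u \<le> inner x u"
    by blast
  define F where "F = Q \<inter> {z. u \<bullet> z = inner x u}"
  have "F face_of Q" unfolding F_def
    by (rule face_of_Int_supporting_hyperplane_le) (use polytope_imp_convex[OF Q(1)] x in \<open>auto simp: inner_commute\<close>)
  moreover have "F \<noteq> {}" using x by (auto simp: F_def inner_commute)
  moreover have "u \<in> normal_cone Q F"
    using x by (auto simp: normal_cone_def F_def inner_commute)
  ultimately have "normal_cone Q F \<in> normal_fan Q" "u \<in> normal_cone Q F"
    unfolding normal_fan_def by blast+
  hence "normal_cone Q F \<in> pos_hull v ` Delta" "u \<in> normal_cone Q F"
    using Q(3) by (simp_all add: fan_cones_def)
  then obtain S where "S \<in> Delta" "u \<in> pos_hull v S" by (metis imageE)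
  thus ?thesis by blast
qed

lemma pos_hull_scale:
  assumes "t \<ge> 0" "x \<in> pos_hull v T"
  shows "t *\<^sub>R x \<in> pos_hull v T"
proof -
  obtain a where a: "x = (\<Sum>i\<in>T. a i *\<^sub>R v i)" "\<forall>i\<in>T. a i \<ge> 0"
    using assms(2) unfolding pos_hull_def by blast
  have "t *\<^sub>R x = (\<Sum>i\<in>T. (t * a i) *\<^sub>R v i)"
    by (simp add: a scaleR_sum_right)
  moreover have "\<forall>i\<in>T. t * a i \<ge> 0" using a assms(1) by simp
  ultimately show ?thesis unfolding pos_hull_def
    by (intro CollectI exI[of _ "\<lambda>i. t * a i"]) auto
qed

lemma pos_hull_convex: "convex (pos_hull v T)"
  unfolding convex_def
proof (intro ballI allI impI)
  fix x y and p q :: real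
  assume "x \<in> pos_hull v T" "y \<in> pos_hull v T" and pq: "0 \<le> p" "0 \<le> q" "p + q = 1"
  then obtain a b where a: "x = (\<Sum>i\<in>T. a i *\<^sub>R v i)" "\<forall>i\<in>T. a i \<ge> 0"
    and b: "y = (\<Sum>i\<in>T. b i *\<^sub>R v i)" "\<forall>i\<in>T. b i \<ge> 0"
    unfolding pos_hull_def by blast
  have "p *\<^sub>R x + q *\<^sub>R y = (\<Sum>i\<in>T. (p * a i + q * b i) *\<^sub>R v i)"
    by (simp add: a b scaleR_sum_right scaleR_add_left sum.distrib)
  moreover have "\<forall>i\<in>T. p * a i + q * b i \<ge> 0" using a b pq by simp
  ultimately show "p *\<^sub>R x + q *\<^sub>R y \<in> pos_hull v T" unfolding pos_hull_def
    by (intro CollectI exI[of _ "\<lambda>i. p * a i + q * b i"]) auto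
qed

lemma pos_hull_span: "pos_hull v T \<subseteq> span (v ` T)"
proof
  fix x assume "x \<in> pos_hull v T"
  then obtain c where "x = (\<Sum>i\<in>T. c i *\<^sub>R v i)" unfolding pos_hull_def by blast
  moreover have "(\<Sum>i\<in>T. c i *\<^sub>R v i) \<in> span (v ` T)"
    by (intro span_sum ballI span_scale span_base imageI)
  ultimately show "x \<in> span (v ` T)" by simp
qed

lemma pos_hull_gen:
  fixes v :: "'n::finite \<Rightarrow> 'a::euclidean_space"
  assumes "i \<in> T" shows "v i \<in> pos_hull v T"
proof -
  have "(\<Sum>j\<in>T. (if j = i then 1 else 0) *\<^sub>R v j) = (\<Sum>j\<in>T. (if j = i then v j else 0))"
    by (rule sum.cong) auto
  also have "\<dots> = v i" using assms by simp
  finally show ?thesis unfolding pos_hull_def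
    by (intro CollectI exI[of _ "\<lambda>j. if j = i then 1 else 0"]) auto
qed

lemma pos_hull_zero: "0 \<in> pos_hull v T"
  unfolding pos_hull_def by (intro CollectI exI[of _ "\<lambda>j. 0"]) auto

lemma rel_int_cone:
  fixes v :: "'n::finite \<Rightarrow> 'a::euclidean_space"
  assumes inj: "inj_on v T" and ind: "independent (v ` T)" and pos: "\<forall>i\<in>T. c i > 0"
  shows "(\<Sum>i\<in>T. c i *\<^sub>R v i) \<in> rel_interior (pos_hull v T)"
proof -
  define K where "K = pos_hull v T"
  define u where "u = (\<Sum>i\<in>T. c i *\<^sub>R v i)"
  define s where "s = 1 + sum c T"
  have "sum c T \<ge> 0" by (rule sum_nonneg) (use pos in auto)
  hence s: "s > 0" by (simp add: s_def)
  define B where "B = insert 0 (v ` T)"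
  have z: "0 \<notin> v ` T" using ind dependent_zero by blast
  have ai: "\<not> affine_dependent B" using affine_dependent_imp_dependent2 ind B_def by blast
  define w where "w x = (if x = 0 then 1/s else c (inv_into T v x) / s)" for x
  have wv: "w (v i) = c i / s" if "i \<in> T" for i
    using that z inv_into_f_f[OF inj that] by (auto simp: w_def)
  have fin: "finite (v ` T)" by simp
  have "u /\<^sub>R s \<in> rel_interior (convex hull B)"
    unfolding rel_interior_convex_hull_explicit[OF ai]
  proof (intro CollectI exI[of _ w] conjI)
    show "\<forall>x\<in>B. 0 < w x" using s pos wv by (auto simp: B_def w_def[of 0])
    have "sum w B = 1/s + sum w (v ` T)"
      using z fin by (simp add: B_def w_def[of 0])
    also have "sum w (v ` T) = (\<Sum>i\<in>T. c i / s)"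
      by (simp add: sum.reindex[OF inj] wv)
    also have "1/s + (\<Sum>i\<in>T. c i / s) = (1 + sum c T) / s"
      by (simp add: sum_divide_distrib add_divide_distrib)
    finally show "sum w B = 1" using s by (simp add: s_def)
    have "(\<Sum>x\<in>B. w x *\<^sub>R x) = (\<Sum>x\<in>v ` T. w x *\<^sub>R x)"
      using z fin by (simp add: B_def)
    also have "\<dots> = (\<Sum>i\<in>T. (c i / s) *\<^sub>R v i)"
      by (simp add: sum.reindex[OF inj] wv)
    also have "\<dots> = u /\<^sub>R s"
      by (simp add: u_def scaleR_sum_right divide_inverse_commute)
    finally show "(\<Sum>x\<in>B. w x *\<^sub>R x) = u /\<^sub>R s" .
  qed
  moreover have "rel_interior (convex hull B) \<subseteq> rel_interior K"
  proof (rule rel_interior_mono)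
    have "B \<subseteq> K" using pos_hull_zero pos_hull_gen by (auto simp: B_def K_def)
    thus DK: "convex hull B \<subseteq> K"
      by (rule hull_minimal) (simp add: K_def pos_hull_convex)
    have aB: "affine hull B = span (v ` T)"
      by (simp add: B_def affine_hull_insert_span_gen)
    have "affine hull K \<subseteq> affine hull B"
      by (rule hull_minimal) (use pos_hull_span aB in \<open>auto simp: K_def intro: subspace_imp_affine\<close>)
    moreover have "affine hull (convex hull B) \<subseteq> affine hull K"
      by (rule hull_mono[OF DK])
    ultimately show "affine hull (convex hull B) = affine hull K"
      unfolding affine_hull_convex_hull by (rule order.antisym[rotated])
  qed
  ultimately have "u /\<^sub>R s \<in> rel_interior K" by blast
  moreover have "u = s *\<^sub>R (u /\<^sub>R s)" using s by simp
  ultimately have "u \<in> (*\<^sub>R) s ` rel_interior K"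
    by (intro image_eqI)
  also have "\<dots> = rel_interior ((*\<^sub>R) s ` K)"
    using s by (intro rel_interior_scaleR) simp
  also have "(*\<^sub>R) s ` K = K"
  proof
    show "(*\<^sub>R) s ` K \<subseteq> K" using s by (auto simp: K_def intro!: pos_hull_scale)
    show "K \<subseteq> (*\<^sub>R) s ` K"
    proof
      fix x assume "x \<in> K"
      hence "x /\<^sub>R s \<in> K" using s by (simp add: K_def pos_hull_scale)
      moreover have "x = s *\<^sub>R (x /\<^sub>R s)" using s by simp
      ultimately show "x \<in> (*\<^sub>R) s ` K" by blast
    qed
  qed
  finally have "u \<in> rel_interior K" .
  thus ?thesis unfolding u_def K_def .
qed

lemma sf_sub: "simplicial_fan v Delta \<Longrightarrow> S \<in> Delta \<Longrightarrow> T \<subseteq> S \<Longrightarrow> T \<in> Delta"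
  unfolding simplicial_fan_def by blast

lemma sf_inj: "simplicial_fan v Delta \<Longrightarrow> S \<in> Delta \<Longrightarrow> inj_on v S"
  unfolding simplicial_fan_def by blast

lemma sf_ind: "simplicial_fan v Delta \<Longrightarrow> S \<in> Delta \<Longrightarrow> independent (v ` S)"
  unfolding simplicial_fan_def by blast

lemma sf_int: "simplicial_fan v Delta \<Longrightarrow> S \<in> Delta \<Longrightarrow> T \<in> Delta \<Longrightarrow>
   pos_hull v S \<inter> pos_hull v T = pos_hull v (S \<inter> T)"
  unfolding simplicial_fan_def by blast

lemma coords_unique:
  fixes v :: "'n::finite \<Rightarrow> 'a::euclidean_space"
  assumes sf: "simplicial_fan v Delta" and S: "S \<in> Delta" "T \<in> Delta"
    and uS: "u \<in> pos_hull v S" and uT: "u \<in> pos_hull v T"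
    and l1: "\<forall>i. i \<notin> S \<longrightarrow> lam $ i = 0" "u = (\<Sum>i\<in>S. lam $ i *\<^sub>R v i)"
    and l2: "\<forall>i. i \<notin> T \<longrightarrow> lam' $ i = 0" "u = (\<Sum>i\<in>T. lam' $ i *\<^sub>R v i)"
  shows "lam = lam'"
proof -
  have "u \<in> pos_hull v (S \<inter> T)" using sf_int[OF sf S] uS uT by blast
  then obtain c where c: "u = (\<Sum>i\<in>S\<inter>T. c i *\<^sub>R v i)" unfolding pos_hull_def by blast
  define c' where "c' i = (if i \<in> S \<inter> T then c i else 0)" for i
  have key: "l $ i = c' i" if R: "R \<in> Delta" "S \<inter> T \<subseteq> R" "\<forall>i. i \<notin> R \<longrightarrow> l $ i = 0"
     "u = (\<Sum>i\<in>R. l $ i *\<^sub>R v i)" for R l i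
  proof (cases "i \<in> R")
    case True
    have "(\<Sum>i\<in>R. c' i *\<^sub>R v i) = (\<Sum>i\<in>S\<inter>T. c i *\<^sub>R v i)"
      by (rule sum.mono_neutral_cong_right) (use R(2) in \<open>auto simp: c'_def\<close>)
    hence "(\<Sum>i\<in>R. l $ i *\<^sub>R v i) = (\<Sum>i\<in>R. c' i *\<^sub>R v i)" using c R(4) by simp
    moreover have "inj_on v R" "independent (v ` R)" using sf_inj[OF sf R(1)] sf_ind[OF sf R(1)] by auto
    ultimately show ?thesis using indep_coeffs_eq[of R v "\<lambda>i. l $ i" c' i] True by simp
  next
    case False
    thus ?thesis using R(2,3) by (auto simp: c'_def)
  qed
  have "lam $ i = c' i" for i using key[OF S(1) _ l1] by blast
  moreover have "lam' $ i = c' i" for i using key[OF S(2) _ l2] by blast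
  ultimately show ?thesis by (simp add: vec_eq_iff)
qed

lemma fan_coords_eq:
  fixes v :: "'n::finite \<Rightarrow> 'a::euclidean_space"
  assumes sf: "simplicial_fan v Delta" and S: "S \<in> Delta" and c: "\<forall>i\<in>S. c i \<ge> 0"
  shows "fan_coords v Delta (\<Sum>i\<in>S. c i *\<^sub>R v i) = (\<chi> i. if i \<in> S then c i else 0)"
proof -
  define u where "u = (\<Sum>i\<in>S. c i *\<^sub>R v i)"
  define T where "T = {i\<in>S. c i > 0}"
  have T: "T \<in> Delta" using sf_sub[OF sf S, of T] by (auto simp: T_def)
  have uT: "u = (\<Sum>i\<in>T. c i *\<^sub>R v i)" unfolding u_def
  proof (rule sum.mono_neutral_right)
    show "finite S" by simp
    show "T \<subseteq> S" by (auto simp: T_def)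
    show "\<forall>i\<in>S - T. c i *\<^sub>R v i = 0"
    proof
      fix i assume i: "i \<in> S - T"
      hence "c i = 0" using c by (force simp: T_def)
      thus "c i *\<^sub>R v i = 0" by simp
    qed
  qed
  define lam0 where "lam0 = (\<chi> i. if i \<in> T then c i else 0)"
  define tgt where "tgt = (\<chi> i. if i \<in> S then c i else 0)"
  let ?P = "\<lambda>lam. \<exists>R\<in>Delta. u \<in> rel_interior (pos_hull v R) \<and>
       (\<forall>i. i \<notin> R \<longrightarrow> lam $ i = 0) \<and> u = (\<Sum>i\<in>R. (lam $ i) *\<^sub>R v i)"
  have uT': "u = (\<Sum>i\<in>T. lam0 $ i *\<^sub>R v i)"
    unfolding uT by (rule sum.cong) (simp_all add: lam0_def)
  have inj: "inj_on v T" by (rule sf_inj[OF sf T])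
  have ind: "independent (v ` T)" by (rule sf_ind[OF sf T])
  have pos: "\<forall>i\<in>T. 0 < c i" by (simp add: T_def)
  have uri: "u \<in> rel_interior (pos_hull v T)"
    unfolding uT by (rule rel_int_cone[OF inj ind pos])
  have l0: "\<forall>i. i \<notin> T \<longrightarrow> lam0 $ i = 0" by (simp add: lam0_def)
  have P0: "?P lam0" using T uri l0 uT' by blast
  have uS: "u \<in> pos_hull v S" unfolding u_def pos_hull_def
    by (intro CollectI exI[of _ c] conjI refl c)
  have uS': "u = (\<Sum>i\<in>S. tgt $ i *\<^sub>R v i)"
    unfolding u_def by (rule sum.cong) (simp_all add: tgt_def)
  have tS: "\<forall>i. i \<notin> S \<longrightarrow> tgt $ i = 0" by (simp add: tgt_def)
  have uniq: "lam = tgt" if H: "?P lam" for lam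
  proof -
    obtain R where R: "R \<in> Delta" "u \<in> rel_interior (pos_hull v R)"
       "\<forall>i. i \<notin> R \<longrightarrow> lam $ i = 0" "u = (\<Sum>i\<in>R. (lam $ i) *\<^sub>R v i)"
      using H by blast
    have uR: "u \<in> pos_hull v R" using R(2) rel_interior_subset by blast
    show ?thesis
      by (rule coords_unique[OF sf R(1) S uR uS R(3,4) tS uS'])
  qed
  have uniq0: "lam = lam0" if "?P lam" for lam
    using uniq[OF that] uniq[OF P0] by simp
  have "?P (THE lam. ?P lam)" by (rule theI[of ?P lam0, OF P0 uniq0])
  hence "(THE lam. ?P lam) = tgt" by (rule uniq)
  thus ?thesis unfolding fan_coords_def u_def tgt_def by simp
qed

lemma A_mat_correct:
  fixes v :: "'n::finite \<Rightarrow> 'a::euclidean_space" and U :: "'m::finite \<Rightarrow> 'a"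
  assumes sf: "simplicial_fan v Delta" and pf: "polytopal_fan v Delta"
    and P: "P \<in> def_polytopes v Delta"
  shows "(A_mat v Delta U *v support_vec v P) $ k = support_fun P (U k)"
proof -
  obtain S where S: "S \<in> Delta" "U k \<in> pos_hull v S" using fan_complete[OF pf] by blast
  then obtain c where c: "U k = (\<Sum>i\<in>S. c i *\<^sub>R v i)" "\<forall>i\<in>S. c i \<ge> 0"
    unfolding pos_hull_def by blast
  obtain C where C: "C \<in> normal_fan P" "pos_hull v S \<subseteq> C"
    using P S(1) unfolding def_polytopes_def coarsened_by_def by blast
  then obtain F where F: "F face_of P" "F \<noteq> {}" "C = normal_cone P F"
    unfolding normal_fan_def by blast
  then obtain x where x: "x \<in> F" by blast
  have xP: "x \<in> P" using F(1) x face_of_imp_subset by blast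
  have sfC: "support_fun P w = inner x w" if "w \<in> C" for w
    by (rule support_fun_eq[OF xP]) (use that x F(3) in \<open>auto simp: normal_cone_def\<close>)
  have "support_fun P (U k) = inner x (U k)" using sfC S(2) C(2) by blast
  also have "\<dots> = (\<Sum>i\<in>S. c i * inner x (v i))" by (simp add: c inner_sum_right)
  also have "\<dots> = (\<Sum>i\<in>S. c i * support_fun P (v i))"
  proof (rule sum.cong)
    fix i assume "i \<in> S"
    hence "v i \<in> C" using C(2) pos_hull_gen by blast
    thus "c i * inner x (v i) = c i * support_fun P (v i)" using sfC by simp
  qed simp
  finally have lhs: "support_fun P (U k) = (\<Sum>i\<in>S. c i * support_fun P (v i))" .
  have fc: "fan_coords v Delta (U k) = (\<chi> i. if i \<in> S then c i else 0)"
    using fan_coords_eq[OF sf S(1) c(2)] c(1) by simp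
  have "(A_mat v Delta U *v support_vec v P) $ k
      = (\<Sum>j\<in>UNIV. (if j \<in> S then c j else 0) * support_fun P (v j))"
    by (simp add: matrix_vector_mult_def A_mat_def fc support_vec_def)
  also have "\<dots> = (\<Sum>j\<in>UNIV. (if j \<in> S then c j * support_fun P (v j) else 0))"
    by (rule sum.cong) auto
  also have "\<dots> = (\<Sum>i\<in>S. c i * support_fun P (v i))"
    by (simp add: sum.inter_restrict[symmetric])
  finally show ?thesis by (simp only: lhs)
qed

theorem corollary3p2:
  fixes v :: "'n::finite \<Rightarrow> 'a::euclidean_space"
    and Delta :: "'n set set"
    and U :: "'m::finite \<Rightarrow> 'a"
    and y :: "real^'m"
  assumes "simplicial_fan v Delta"
    and "polytopal_fan v Delta"
    and "\<exists>P\<in>def_polytopes v Delta. \<forall>i. y $ i = support_fun P (U i)"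
  shows "ls_estimator v Delta U y = {h \<in> deformation_cone v Delta. A_mat v Delta U *v h = y}"
proof -
  define D where "D = def_polytopes v Delta"
  have cpos: "1 / real CARD('m) > 0" by simp
  have nonneg: "ls_objective Q U y \<ge> 0" for Q
    unfolding ls_objective_def by (intro mult_nonneg_nonneg sum_nonneg) auto
  have zero_iff: "ls_objective Q U y = 0 \<longleftrightarrow> (\<forall>i. support_fun Q (U i) = y $ i)" for Q
  proof -
    have "ls_objective Q U y = 0 \<longleftrightarrow> (\<Sum>i\<in>UNIV. (support_fun Q (U i) - y $ i)\<^sup>2) = 0"
      unfolding ls_objective_def using cpos by simp
    also have "\<dots> \<longleftrightarrow> (\<forall>i. (support_fun Q (U i) - y $ i)\<^sup>2 = 0)"
      by (subst sum_nonneg_eq_0_iff) auto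
    finally show ?thesis by simp
  qed
  obtain P0 where P0: "P0 \<in> D" "\<forall>i. y $ i = support_fun P0 (U i)" using assms(3) D_def by blast
  have obj0: "ls_objective P0 U y = 0" using zero_iff P0(2) by simp
  have eq1: "{P \<in> D. \<forall>Q\<in>D. ls_objective P U y \<le> ls_objective Q U y}
           = {P \<in> D. A_mat v Delta U *v support_vec v P = y}"
  proof -
    have "(\<forall>Q\<in>D. ls_objective P U y \<le> ls_objective Q U y) \<longleftrightarrow> ls_objective P U y = 0" for P
      using nonneg[of P] nonneg P0(1) obj0 by (metis order.antisym)
    moreover have "ls_objective P U y = 0 \<longleftrightarrow> A_mat v Delta U *v support_vec v P = y" if "P \<in> D" for P
      using A_mat_correct[OF assms(1,2), of P U] that zero_iff[of P]
      by (auto simp: D_def vec_eq_iff)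
    ultimately show ?thesis by auto
  qed
  have "ls_estimator v Delta U y = support_vec v ` {P \<in> D. A_mat v Delta U *v support_vec v P = y}"
    unfolding ls_estimator_def D_def[symmetric] eq1 by (rule refl)
  also have "\<dots> = {h \<in> deformation_cone v Delta. A_mat v Delta U *v h = y}"
    unfolding deformation_cone_def D_def by blast
  finally show ?thesis .
qed

end
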